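(* Let $\xi$ be a positive integer-valued random variable with $\xi\ge1$ almost surely, let $\alpha\in(0,1]$ with $\mathbb{E}[\xi]\alpha>1$, and let $q$ be the extinction probability of a Galton--Watson process whose offspring distribution $\zeta$ is $\mathrm{Bin}(\xi,\alpha)$ (i.e., given $\xi$, $\zeta$ is binomial with parameters $\xi$ and $\alpha$). Then $$q\le\frac{1-\alpha}{1-\mathbb{E}\big[(1-\alpha)^\xi\big]-\mathbb{E}\big[\xi\alpha(1-\alpha)^{\xi-1}\big]}.$$ *)

theory Defs
  imports "HOL-Probability.Probability"
begin

definition bin_mix_pmf :: "nat pmf \<Rightarrow> real \<Rightarrow> nat pmf" where
  "bin_mix_pmf \<xi> \<alpha> = bind_pmf \<xi> (\<lambda>n. binomial_pmf n \<alpha>)"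

primrec iid_sum_pmf :: "nat pmf \<Rightarrow> nat \<Rightarrow> nat pmf" where
  "iid_sum_pmf p 0 = return_pmf 0"
| "iid_sum_pmf p (Suc k) = bind_pmf p (\<lambda>a. map_pmf (\<lambda>b. a + b) (iid_sum_pmf p k))"

text \<open>Law of the generation size Z_n of a Galton--Watson process started from Z_0 = 1
  with offspring law p: Z_(n+1) is the sum of Z_n independent copies of the offspring variable.\<close>
primrec gw_pmf :: "nat pmf \<Rightarrow> nat \<Rightarrow> nat pmf" where
  "gw_pmf p 0 = return_pmf 1"
| "gw_pmf p (Suc n) = bind_pmf (gw_pmf p n) (iid_sum_pmf p)"

text \<open>Extinction probability: P(exists n. Z_n = 0) = lim_n P(Z_n = 0) (increasing events).\<close>
definition extinction_prob :: "nat pmf \<Rightarrow> real" where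
  "extinction_prob p = (SUP n. pmf (gw_pmf p n) 0)"

end

theory Submission imports Defs begin

lemma integ_pow:
  fixes p :: "nat pmf" and s :: real assumes "0 \<le> s" "s \<le> 1"
  shows "integrable (measure_pmf p) (\<lambda>k. s ^ k)"
  using measure_pmf.integrable_const_bound[where M=p and f="\<lambda>k. s ^ k" and B=1] by (auto simp: assms power_le_one)

lemma G_iid:
  fixes s :: real assumes "0 \<le> s"
  shows "(\<integral>\<^sup>+ m. ennreal (s ^ m) \<partial>measure_pmf (iid_sum_pmf p k)) = (\<integral>\<^sup>+ m. ennreal (s ^ m) \<partial>measure_pmf p) ^ k"
proof (induction k)
  case 0 then show ?case by simp
next
  case (Suc k)
  have "(\<integral>\<^sup>+ m. ennreal (s ^ m) \<partial>measure_pmf (iid_sum_pmf p (Suc k)))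
      = (\<integral>\<^sup>+ a. \<integral>\<^sup>+ b. ennreal (s ^ a) * ennreal (s ^ b) \<partial>measure_pmf (iid_sum_pmf p k) \<partial>measure_pmf p)"
    by (simp add: power_add ennreal_mult assms)
  also have "\<dots> = (\<integral>\<^sup>+ a. ennreal (s ^ a) * (\<integral>\<^sup>+ m. ennreal (s ^ m) \<partial>measure_pmf p) ^ k \<partial>measure_pmf p)"
    by (simp add: nn_integral_cmult Suc)
  also have "\<dots> = (\<integral>\<^sup>+ m. ennreal (s ^ m) \<partial>measure_pmf p) ^ Suc k"
    by (simp add: nn_integral_multc mult.commute)
  finally show ?case .
qed

lemma G_pmf0:
  "ennreal (pmf q 0) = (\<integral>\<^sup>+ k. ennreal ((0::real) ^ k) \<partial>measure_pmf q)"
proof -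
  have "(\<lambda>k. ennreal ((0::real) ^ k)) = indicator {0}"
    by (auto simp: fun_eq_iff split: split_indicator)
  then show ?thesis by (simp add: emeasure_pmf_single)
qed

lemma G_real:
  fixes p :: "nat pmf" assumes "0 \<le> s" "s \<le> 1"
  shows "(\<integral>\<^sup>+ k. ennreal (s ^ k) \<partial>measure_pmf p) = ennreal (measure_pmf.expectation p (\<lambda>k. s ^ k))"
  by (rule nn_integral_eq_integral) (auto simp: integ_pow assms)

lemma gw_bound:
  fixes p :: "nat pmf" and r :: real
  assumes r: "0 \<le> r" "r \<le> 1"
    and f: "\<And>s. 0 \<le> s \<Longrightarrow> s \<le> r \<Longrightarrow> measure_pmf.expectation p (\<lambda>k. s ^ k) \<le> r"
  shows "0 \<le> s \<Longrightarrow> s \<le> r \<Longrightarrow> (\<integral>\<^sup>+ k. ennreal (s ^ k) \<partial>measure_pmf (gw_pmf p n)) \<le> ennreal r"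
proof (induction n arbitrary: s)
  case 0 then show ?case by simp
next
  case (Suc n)
  define t where "t = measure_pmf.expectation p (\<lambda>k. s ^ k)"
  have t0: "0 \<le> t" unfolding t_def by (rule integral_nonneg_AE) (auto simp: Suc.prems)
  have tr: "t \<le> r" unfolding t_def using f Suc.prems by auto
  have "(\<integral>\<^sup>+ k. ennreal (s ^ k) \<partial>measure_pmf (gw_pmf p (Suc n)))
     = (\<integral>\<^sup>+ m. (\<integral>\<^sup>+ k. ennreal (s ^ k) \<partial>measure_pmf p) ^ m \<partial>measure_pmf (gw_pmf p n))"
    by (simp add: G_iid Suc.prems)
  also have "\<dots> = (\<integral>\<^sup>+ m. ennreal (t ^ m) \<partial>measure_pmf (gw_pmf p n))"
    using Suc.prems r by (simp add: G_real t_def ennreal_power t0)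
  also have "\<dots> \<le> ennreal r" using Suc.IH t0 tr by auto
  finally show ?case .
qed

lemma integ_ind: "integrable (measure_pmf p) (indicator A :: _ \<Rightarrow> real)"
  using measure_pmf.integrable_const_bound[where M=p and f="indicator A :: _ \<Rightarrow> real" and B=1]
  by (auto split: split_indicator)

lemma poly_int:
  fixes p :: "nat pmf" and r :: real
  shows "measure_pmf.expectation p (\<lambda>k. r^2 + (1 - r^2) * indicator {0} k + (r - r^2) * indicator {1} k)
     = r^2 + (1 - r^2) * pmf p 0 + (r - r^2) * pmf p 1"
proof -
  have i0: "integrable (measure_pmf p) (\<lambda>k. (1 - r^2) * indicator {0} k :: real)"
    by (intro integrable_mult_right integ_ind)
  have i1: "integrable (measure_pmf p) (\<lambda>k. (r - r^2) * indicator {1} k :: real)"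
    by (intro integrable_mult_right integ_ind)
  have "measure_pmf.expectation p (\<lambda>k. r^2 + (1 - r^2) * indicator {0} k + (r - r^2) * indicator {1} k)
     = measure_pmf.expectation p (\<lambda>k. r^2 + (1 - r^2) * indicator {0} k) + measure_pmf.expectation p (\<lambda>k. (r - r^2) * indicator {1} k)"
    by (rule Bochner_Integration.integral_add) (use i0 i1 in auto)
  also have "measure_pmf.expectation p (\<lambda>k. r^2 + (1 - r^2) * indicator {0} k) = r^2 + (1 - r^2) * pmf p 0"
    by (subst Bochner_Integration.integral_add) (use i0 in \<open>auto simp: measure_pmf_single\<close>)
  also have "measure_pmf.expectation p (\<lambda>k. (r - r^2) * indicator {1} k) = (r - r^2) * pmf p 1"
    by (simp add: measure_pmf_single del: insert_iff)
  finally show ?thesis .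
qed

lemma pow_le_poly:
  fixes r :: real assumes "0 \<le> r" "r \<le> 1"
  shows "r ^ k \<le> r^2 + (1 - r^2) * indicator {0} k + (r - r^2) * indicator {1} k"
proof -
  consider "k = 0" | "k = 1" | "k \<ge> 2" by linarith
  then show ?thesis
  proof cases
    case 3
    then have "r ^ k \<le> r ^ 2" using assms by (intro power_decreasing) auto
    with 3 show ?thesis by simp
  qed simp_all
qed

theorem lemma7:
  fixes \<xi> :: "nat pmf" and \<alpha> :: real
  assumes pos: "\<forall>n\<in>set_pmf \<xi>. n \<ge> 1"
    and \<alpha>: "0 < \<alpha>" "\<alpha> \<le> 1"
    and supercrit: "(\<integral>\<^sup>+ n. ennreal (real n) \<partial>measure_pmf \<xi>) * ennreal \<alpha> > 1"
  shows "extinction_prob (bin_mix_pmf \<xi> \<alpha>) \<le>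
    (1 - \<alpha>) / (1 - measure_pmf.expectation \<xi> (\<lambda>n. (1 - \<alpha>) ^ n)
                 - measure_pmf.expectation \<xi> (\<lambda>n. real n * \<alpha> * (1 - \<alpha>) ^ (n - 1)))"
proof -
  define B where "B = bin_mix_pmf \<xi> \<alpha>"
  define p0 where "p0 = measure_pmf.expectation \<xi> (\<lambda>n. (1 - \<alpha>) ^ n)"
  define p1 where "p1 = measure_pmf.expectation \<xi> (\<lambda>n. real n * \<alpha> * (1 - \<alpha>) ^ (n - 1))"
  define D where "D = 1 - p0 - p1"
  have hp0: "pmf B 0 = p0"
    unfolding B_def bin_mix_pmf_def p0_def pmf_bind using \<alpha> by simp
  have hp1: "pmf B 1 = p1"
    unfolding B_def bin_mix_pmf_def p1_def pmf_bind using \<alpha> by simp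
  have p0_nn: "0 \<le> p0" unfolding p0_def using \<alpha> by (intro integral_nonneg_AE) auto
  have p0_le: "p0 \<le> 1 - \<alpha>"
  proof -
    have "p0 \<le> measure_pmf.expectation \<xi> (\<lambda>n. 1 - \<alpha>)"
      unfolding p0_def
    proof (rule integral_mono_AE)
      show "integrable (measure_pmf \<xi>) (\<lambda>n. (1 - \<alpha>) ^ n)" using \<alpha> by (intro integ_pow) auto
      show "AE n in measure_pmf \<xi>. (1 - \<alpha>) ^ n \<le> 1 - \<alpha>"
        unfolding AE_measure_pmf_iff using pos \<alpha>
        by (auto intro!: power_decreasing[where n=1, simplified])
    qed simp
    then show ?thesis by simp
  qed
  have D_pos: "D > 0"
  proof (rule ccontr)
    assume "\<not> D > 0"
    then have s01: "pmf B 0 + pmf B 1 \<ge> 1" unfolding D_def hp0 hp1 by simp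
    have sub: "set_pmf \<xi> \<subseteq> {1}"
    proof
      fix n assume n: "n \<in> set_pmf \<xi>"
      have "pmf (binomial_pmf n \<alpha>) n = \<alpha> ^ n" using \<alpha> by simp
      then have "n \<in> set_pmf (binomial_pmf n \<alpha>)" using \<alpha> by (simp add: set_pmf_iff)
      then have nB: "n \<in> set_pmf B" using n unfolding B_def bin_mix_pmf_def by auto
      show "n \<in> {1}"
      proof (rule ccontr)
        assume "n \<notin> {1}"
        with pos n have n2: "n \<noteq> 0" "n \<noteq> 1" by auto
        have "measure (measure_pmf B) {0, 1, n} = pmf B 0 + pmf B 1 + pmf B n"
          using n2 by (simp add: measure_measure_pmf_finite)
        moreover have "measure (measure_pmf B) {0, 1, n} \<le> 1" by simp
        moreover have "pmf B n > 0" using nB by (simp add: pmf_positive)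
        ultimately show False using s01 by linarith
      qed
    qed
    have "(\<integral>\<^sup>+ n. ennreal (real n) \<partial>measure_pmf \<xi>) = (\<integral>\<^sup>+ n. 1 \<partial>measure_pmf \<xi>)"
      by (rule nn_integral_cong_AE) (use sub in \<open>auto simp: AE_measure_pmf_iff\<close>)
    also have "\<dots> = 1" by simp
    finally have "(\<integral>\<^sup>+ n. ennreal (real n) \<partial>measure_pmf \<xi>) * ennreal \<alpha> \<le> 1"
      using \<alpha> by simp
    with supercrit show False by simp
  qed
  define r where "r = p0 / D"
  have r_nn: "0 \<le> r" unfolding r_def using p0_nn D_pos by simp
  have rD: "r * D = p0" unfolding r_def using D_pos by simp
  have rhs: "r \<le> (1 - \<alpha>) / D" unfolding r_def using p0_le D_pos by (intro divide_right_mono) auto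
  have xn: "pmf (gw_pmf B n) 0 \<le> (1 - \<alpha>) / D" for n
  proof (cases "r \<le> 1")
    case False
    then show ?thesis using rhs pmf_le_1[of "gw_pmf B n" 0] by linarith
  next
    case True
    have f: "measure_pmf.expectation B (\<lambda>k. s ^ k) \<le> r" if s: "0 \<le> s" "s \<le> r" for s
    proof -
      have "measure_pmf.expectation B (\<lambda>k. s ^ k) \<le> measure_pmf.expectation B (\<lambda>k. r ^ k)"
        using s True by (intro integral_mono integ_pow power_mono) auto
      also have "\<dots> \<le> measure_pmf.expectation B (\<lambda>k. r^2 + (1 - r^2) * indicator {0} k + (r - r^2) * indicator {1} k)"
        using r_nn True
        by (intro integral_mono integ_pow pow_le_poly Bochner_Integration.integrable_add integrable_const
            integrable_mult_right integ_ind) auto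
      also have "\<dots> = r^2 + (1 - r^2) * p0 + (r - r^2) * p1"
        unfolding poly_int hp0 hp1 ..
      also have "\<dots> = r"
      proof -
        have "r * (r * D) = r * p0" using rD by simp
        then show ?thesis using rD unfolding D_def by (simp add: power2_eq_square algebra_simps)
      qed
      finally show ?thesis .
    qed
    have "ennreal (pmf (gw_pmf B n) 0) \<le> ennreal r"
      unfolding G_pmf0 using gw_bound[of r B 0 n] f r_nn True by auto
    then have "pmf (gw_pmf B n) 0 \<le> r" using r_nn by simp
    then show ?thesis using rhs by linarith
  qed
  have "extinction_prob B \<le> (1 - \<alpha>) / D"
    unfolding extinction_prob_def by (rule cSUP_least) (use xn in auto)
  then show ?thesis unfolding B_def D_def p0_def p1_def .
qed

end
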